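(* The algebra $D(W)$ is not commutative.
   Context: Fix real $\alpha,\beta,v$ with $\alpha>-1$, $\beta>-1$, $|\alpha-\beta|<|v|<\alpha+\beta+2$; $\kappa_{\pm v,\pm\beta}=\alpha\pm v\pm\beta$. Let $W(t)=t^\alpha(1-t)^\beta\widetilde W(t)$ on $(0,1)$ with $$\widetilde W(t)=\begin{pmatrix}\frac{v(\kappa_{v,\beta}+2)}{\kappa_{v,-\beta}}t^2-(\kappa_{v,\beta}+2)t+(\alpha+1) & (\alpha+\beta+2)t-(\alpha+1)\\ (\alpha+\beta+2)t-(\alpha+1) & -\frac{v(\kappa_{-v,\beta}+2)}{\kappa_{-v,-\beta}}t^2-(\kappa_{-v,\beta}+2)t+(\alpha+1)\end{pmatrix},$$ and $(P_n^{(\alpha,\beta,v)})$ the monic orthogonal $2\times2$ matrix polynomials for $\int_0^1PWQ^*dt$. $D(W)$ is the algebra (under composition) of right-acting differential operators $D=\sum_i\frac{d^i}{dt^i}F_i$ ($F_i$ $2\times2$ matrix polynomials, $PD=\sum_iP^{(i)}F_i$) such that for every $n\ge0$ there is a constant matrix $\Lambda_n(D)$ with $P_n^{(\alpha,\beta,v)}D=\Lambda_n(D)P_n^{(\alpha,\beta,v)}$. *)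

theory Defs
  imports "HOL-Analysis.Analysis" "HOL-Computational_Algebra.Polynomial"
begin

text \<open>2x2 matrix polynomials are represented as 2x2 matrices with real polynomial entries.
  Index 1 is the first row/column, index 2 the second.\<close>

type_synonym mpoly2 = "real poly ^ 2 ^ 2"

definition meval :: "mpoly2 \<Rightarrow> real \<Rightarrow> real ^ 2 ^ 2" where
  "meval P t = (\<chi> i j. poly (P $ i $ j) t)"

definition mderiv :: "mpoly2 \<Rightarrow> mpoly2" where
  "mderiv P = (\<chi> i j. pderiv (P $ i $ j))"

definition mcoeff :: "mpoly2 \<Rightarrow> nat \<Rightarrow> real ^ 2 ^ 2" where
  "mcoeff P k = (\<chi> i j. coeff (P $ i $ j) k)"

definition mdeg_le :: "mpoly2 \<Rightarrow> nat \<Rightarrow> bool" where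
  "mdeg_le P n \<longleftrightarrow> (\<forall>i j. degree (P $ i $ j) \<le> n)"

definition Wtil :: "real \<Rightarrow> real \<Rightarrow> real \<Rightarrow> real \<Rightarrow> real ^ 2 ^ 2" where
  "Wtil \<alpha> \<beta> v t = (\<chi> i j.
     if i = j then
       (if i = 1 then v * ((\<alpha> + v + \<beta>) + 2) / (\<alpha> + v - \<beta>) * t^2
                      - ((\<alpha> + v + \<beta>) + 2) * t + (\<alpha> + 1)
        else - v * ((\<alpha> - v + \<beta>) + 2) / (\<alpha> - v - \<beta>) * t^2
                      - ((\<alpha> - v + \<beta>) + 2) * t + (\<alpha> + 1))
     else (\<alpha> + \<beta> + 2) * t - (\<alpha> + 1))"

definition Wgt :: "real \<Rightarrow> real \<Rightarrow> real \<Rightarrow> real \<Rightarrow> real ^ 2 ^ 2" where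
  "Wgt \<alpha> \<beta> v t = (t powr \<alpha> * (1 - t) powr \<beta>) *\<^sub>R Wtil \<alpha> \<beta> v t"

definition mip :: "real \<Rightarrow> real \<Rightarrow> real \<Rightarrow> mpoly2 \<Rightarrow> mpoly2 \<Rightarrow> real ^ 2 ^ 2" where
  "mip \<alpha> \<beta> v P Q = integral {0..1}
     (\<lambda>t. meval P t ** Wgt \<alpha> \<beta> v t ** transpose (meval Q t))"

definition is_MOP :: "real \<Rightarrow> real \<Rightarrow> real \<Rightarrow> nat \<Rightarrow> mpoly2 \<Rightarrow> bool" where
  "is_MOP \<alpha> \<beta> v n P \<longleftrightarrow>
     mdeg_le P n \<and> mcoeff P n = mat 1 \<and>
     (\<forall>Q. (\<forall>i j. degree (Q $ i $ j) < n) \<longrightarrow> mip \<alpha> \<beta> v P Q = 0)"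

text \<open>A right-acting differential operator \<open>D = \<Sum>_i d^i/dt^i F_i\<close> is given by the list of
  its coefficients [F_0, F_1, ...]; it acts by \<open>P D = \<Sum>_i P^(i) F_i\<close>.\<close>

definition dact :: "mpoly2 list \<Rightarrow> mpoly2 \<Rightarrow> mpoly2" where
  "dact Fs P = (\<Sum>i<length Fs. (mderiv ^^ i) P ** (Fs ! i))"

definition DW :: "real \<Rightarrow> real \<Rightarrow> real \<Rightarrow> mpoly2 list set" where
  "DW \<alpha> \<beta> v = {Fs. \<forall>n P. is_MOP \<alpha> \<beta> v n P \<longrightarrow>
       (\<exists>\<Lambda> :: real ^ 2 ^ 2. dact Fs P = (\<chi> i j. [:\<Lambda> $ i $ j:]) ** P)}"

end

theory Submission
  imports Defs
begin


lemma sum2: "(\<Sum>k\<in>(UNIV::2 set). f k) = f 1 + f 2" by (rule sum_2)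

lemma forall2: "(\<forall>i::2. P i) \<longleftrightarrow> P 1 \<and> P 2"
  by (metis exhaust_2)

lemma meval_mult: "meval (X ** Y) t = meval X t ** meval Y t"
  by (simp add: meval_def matrix_matrix_mult_def vec_eq_iff poly_sum)

lemma meval_transpose: "meval (transpose X) t = transpose (meval X t)"
  by (simp add: meval_def transpose_def vec_eq_iff)

lemma meval_add: "meval (X + Y) t = meval X t + meval Y t"
  by (simp add: meval_def vec_eq_iff)

lemma meval_diff: "meval (X - Y) t = meval X t - meval Y t"
  by (simp add: meval_def vec_eq_iff)

definition wf :: "real \<Rightarrow> real \<Rightarrow> real \<Rightarrow> real" where
  "wf \<alpha> \<beta> t = t powr \<alpha> * (1 - t) powr \<beta>"

lemma int_basic:
  assumes "\<alpha> > -1" "\<beta> > -1"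
  shows "((\<lambda>t. t ^ k * wf \<alpha> \<beta> t) has_integral Beta (\<alpha> + real k + 1) (\<beta> + 1)) {0..1}"
proof -
  have h: "((\<lambda>t. t powr (\<alpha> + real k + 1 - 1) * (1 - t) powr (\<beta> + 1 - 1)) has_integral
           Beta (\<alpha> + real k + 1) (\<beta> + 1)) {0..1}"
    by (rule has_integral_Beta_real) (use assms in auto)
  have eq: "t powr (\<alpha> + real k + 1 - 1) * (1 - t) powr (\<beta> + 1 - 1) = t ^ k * wf \<alpha> \<beta> t"
    if "t \<in> {0..1}" for t :: real
  proof (cases "t = 0")
    case True
    then show ?thesis by (simp add: wf_def)
  next
    case False
    with that have "t > 0" by auto
    then have "t powr (\<alpha> + real k) = t ^ k * t powr \<alpha>"
      by (simp add: powr_add powr_realpow mult.commute)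
    then show ?thesis by (simp add: wf_def)
  qed
  show ?thesis by (rule has_integral_eq[OF _ h]) (use eq in simp)
qed

definition Lf :: "real \<Rightarrow> real \<Rightarrow> real poly \<Rightarrow> real" where
  "Lf \<alpha> \<beta> p = integral {0..1} (\<lambda>t. poly p t * wf \<alpha> \<beta> t)"

lemma int_poly:
  assumes "\<alpha> > -1" "\<beta> > -1"
  shows "((\<lambda>t. poly p t * wf \<alpha> \<beta> t) has_integral
          (\<Sum>k\<le>degree p. coeff p k * Beta (\<alpha> + real k + 1) (\<beta> + 1))) {0..1}"
proof -
  have "((\<lambda>t. \<Sum>k\<le>degree p. coeff p k * (t ^ k * wf \<alpha> \<beta> t)) has_integral
          (\<Sum>k\<le>degree p. coeff p k * Beta (\<alpha> + real k + 1) (\<beta> + 1))) {0..1}"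
    by (intro has_integral_sum finite_atMost has_integral_mult_right int_basic assms)
  moreover have "(\<lambda>t. \<Sum>k\<le>degree p. coeff p k * (t ^ k * wf \<alpha> \<beta> t)) = (\<lambda>t. poly p t * wf \<alpha> \<beta> t)"
    by (auto simp: poly_altdef sum_distrib_right mult.assoc)
  ultimately show ?thesis by simp
qed

lemma int_Lf:
  assumes "\<alpha> > -1" "\<beta> > -1"
  shows "((\<lambda>t. poly p t * wf \<alpha> \<beta> t) has_integral Lf \<alpha> \<beta> p) {0..1}"
  using int_poly[OF assms] unfolding Lf_def by (metis integral_unique)

lemma Lf_add:
  assumes "\<alpha> > -1" "\<beta> > -1"
  shows "Lf \<alpha> \<beta> (p + q) = Lf \<alpha> \<beta> p + Lf \<alpha> \<beta> q"
proof -
  have "((\<lambda>t. poly p t * wf \<alpha> \<beta> t + poly q t * wf \<alpha> \<beta> t) has_integral Lf \<alpha> \<beta> p + Lf \<alpha> \<beta> q) {0..1}"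
    by (intro has_integral_add int_Lf assms)
  then have "((\<lambda>t. poly (p+q) t * wf \<alpha> \<beta> t) has_integral Lf \<alpha> \<beta> p + Lf \<alpha> \<beta> q) {0..1}"
    by (simp add: distrib_right)
  then show ?thesis using int_Lf[OF assms, of "p+q"] by (metis has_integral_unique)
qed

lemma Lf_smult:
  assumes "\<alpha> > -1" "\<beta> > -1"
  shows "Lf \<alpha> \<beta> (smult c p) = c * Lf \<alpha> \<beta> p"
proof -
  have "((\<lambda>t. c * (poly p t * wf \<alpha> \<beta> t)) has_integral c * Lf \<alpha> \<beta> p) {0..1}"
    by (intro has_integral_mult_right int_Lf assms)
  then have "((\<lambda>t. poly (smult c p) t * wf \<alpha> \<beta> t) has_integral c * Lf \<alpha> \<beta> p) {0..1}"
    by (simp add: mult.assoc)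
  then show ?thesis using int_Lf[OF assms, of "smult c p"] by (metis has_integral_unique)
qed

lemma Lf_0: "Lf \<alpha> \<beta> 0 = 0" by (simp add: Lf_def)

lemma Lf_neg:
  assumes "\<alpha> > -1" "\<beta> > -1"
  shows "Lf \<alpha> \<beta> (- p) = - Lf \<alpha> \<beta> p"
  using Lf_smult[OF assms, of "-1" p] by simp

lemma Lf_diff:
  assumes "\<alpha> > -1" "\<beta> > -1"
  shows "Lf \<alpha> \<beta> (p - q) = Lf \<alpha> \<beta> p - Lf \<alpha> \<beta> q"
  using Lf_add[OF assms, of p "-q"] Lf_neg[OF assms, of q] by simp

lemma Lf_sum:
  assumes "\<alpha> > -1" "\<beta> > -1"
  shows "Lf \<alpha> \<beta> (\<Sum>i\<in>I. f i) = (\<Sum>i\<in>I. Lf \<alpha> \<beta> (f i))"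
proof (induction I rule: infinite_finite_induct)
  case (infinite A) then show ?case by (simp add: Lf_0)
next
  case empty then show ?case by (simp add: Lf_0)
next
  case (insert x F) then show ?case by (simp add: Lf_add[OF assms])
qed

lemma Lf_monom:
  assumes "\<alpha> > -1" "\<beta> > -1"
  shows "Lf \<alpha> \<beta> (monom c k) = c * Beta (\<alpha> + real k + 1) (\<beta> + 1)"
proof -
  have "((\<lambda>t. c * (t ^ k * wf \<alpha> \<beta> t)) has_integral c * Beta (\<alpha> + real k + 1) (\<beta> + 1)) {0..1}"
    by (intro has_integral_mult_right int_basic assms)
  then have "((\<lambda>t. poly (monom c k) t * wf \<alpha> \<beta> t) has_integral c * Beta (\<alpha> + real k + 1) (\<beta> + 1)) {0..1}"
    by (simp add: poly_monom mult.assoc)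
  then show ?thesis using int_Lf[OF assms, of "monom c k"] by (metis has_integral_unique)
qed

definition Sp :: "real poly" where "Sp = [:0, 1, -1:]"
definition sigp :: "real \<Rightarrow> real \<Rightarrow> real poly" where "sigp \<alpha> \<beta> = [:-(\<alpha>+1), \<alpha>+\<beta>+2:]"

definition Phi :: "real \<Rightarrow> real \<Rightarrow> real poly \<Rightarrow> real poly" where
  "Phi \<alpha> \<beta> c = Sp * pderiv c - sigp \<alpha> \<beta> * c"

lemma Phi_monom:
  "Phi \<alpha> \<beta> (monom 1 k) = monom (real k + \<alpha> + 1) k - monom (real k + \<alpha> + \<beta> + 2) (Suc k)"
proof (rule poly_ext)
  fix x :: real
  show "poly (Phi \<alpha> \<beta> (monom 1 k)) x = poly (monom (real k + \<alpha> + 1) k - monom (real k + \<alpha> + \<beta> + 2) (Suc k)) x"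
  proof (cases k)
    case 0 then show ?thesis by (simp add: Phi_def Sp_def sigp_def pderiv_monom poly_monom algebra_simps)
  next
    case (Suc m) then show ?thesis by (simp add: Phi_def Sp_def sigp_def pderiv_monom poly_monom algebra_simps)
  qed
qed

lemma Lf_Phi_monom:
  assumes "\<alpha> > -1" "\<beta> > -1"
  shows "Lf \<alpha> \<beta> (Phi \<alpha> \<beta> (monom 1 k)) = 0"
proof -
  have x: "\<alpha> + real k + 1 \<notin> \<int>\<^sub>\<le>\<^sub>0" using assms by (auto elim!: nonpos_Ints_cases)
  have "(\<alpha> + real k + 1 + (\<beta> + 1)) * Beta (\<alpha> + real k + 1 + 1) (\<beta> + 1) = (\<alpha> + real k + 1) * Beta (\<alpha> + real k + 1) (\<beta> + 1)"
    by (rule Beta_plus1_left[OF x])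
  then show ?thesis
    by (simp add: Phi_monom Lf_diff[OF assms] Lf_monom[OF assms] algebra_simps)
qed


lemma Phi_add: "Phi \<alpha> \<beta> (p + q) = Phi \<alpha> \<beta> p + Phi \<alpha> \<beta> q"
  unfolding Phi_def by (simp add: pderiv_add distrib_left)

lemma Phi_smult: "Phi \<alpha> \<beta> (smult c p) = smult c (Phi \<alpha> \<beta> p)"
  unfolding Phi_def by (simp add: pderiv_smult smult_diff_right)

lemma Phi_0: "Phi \<alpha> \<beta> 0 = 0" unfolding Phi_def by simp

lemma Phi_sum: "Phi \<alpha> \<beta> (\<Sum>i\<in>I. f i) = (\<Sum>i\<in>I. Phi \<alpha> \<beta> (f i))"
proof (induction I rule: infinite_finite_induct)
  case (infinite A) then show ?case by (simp add: Phi_0)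
next
  case empty then show ?case by (simp add: Phi_0)
next
  case (insert x F) then show ?case by (simp add: Phi_add)
qed

lemma Lf_Phi:
  assumes "\<alpha> > -1" "\<beta> > -1"
  shows "Lf \<alpha> \<beta> (Phi \<alpha> \<beta> c) = 0"
proof -
  have c: "c = (\<Sum>i\<le>degree c. smult (coeff c i) (monom 1 i))"
    by (simp add: smult_monom poly_as_sum_of_monoms)
  have "Lf \<alpha> \<beta> (Phi \<alpha> \<beta> c) = Lf \<alpha> \<beta> (\<Sum>i\<le>degree c. smult (coeff c i) (Phi \<alpha> \<beta> (monom 1 i)))"
    by (subst c) (simp only: Phi_sum Phi_smult)
  also have "\<dots> = (\<Sum>i\<le>degree c. coeff c i * Lf \<alpha> \<beta> (Phi \<alpha> \<beta> (monom 1 i)))"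
    by (simp only: Lf_sum[OF assms] Lf_smult[OF assms])
  also have "\<dots> = 0" by (simp add: Lf_Phi_monom[OF assms])
  finally show ?thesis .
qed



definition smat :: "real poly \<Rightarrow> mpoly2 \<Rightarrow> mpoly2" where
  "smat s X = (\<chi> i j. s * X $ i $ j)"

lemma matrix_add_rdistrib: "((B + C) ** A) = (B ** A) + (C ** A)"
  by (vector matrix_matrix_mult_def sum.distrib[symmetric] field_simps)

lemma matrix_diff_ldistrib: "(A ** (B - C)) = (A ** B) - (A ** (C::'a::ring_1^_^_))"
  by (vector matrix_matrix_mult_def sum_subtractf[symmetric] field_simps)

lemma matrix_diff_rdistrib: "((B - C) ** A) = (B ** A) - (C ** (A::'a::ring_1^_^_))"
  by (vector matrix_matrix_mult_def sum_subtractf[symmetric] field_simps)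

lemma matrix_neg_l: "((- B) ** A) = - (B ** (A::'a::ring_1^_^_))"
  by (vector matrix_matrix_mult_def sum_negf[symmetric])

lemma matrix_neg_r: "(A ** (- B)) = - (A ** (B::'a::ring_1^_^_))"
  by (vector matrix_matrix_mult_def sum_negf[symmetric])

lemma smat_mult_l: "smat s X ** Y = smat s (X ** Y)"
  by (simp add: smat_def matrix_matrix_mult_def vec_eq_iff sum_distrib_left mult.assoc)

lemma smat_mult_r: "X ** smat s Y = smat s (X ** Y)"
  by (simp add: smat_def matrix_matrix_mult_def vec_eq_iff sum_distrib_left mult_ac)

lemma smat_add: "smat s (X + Y) = smat s X + smat s Y"
  by (simp add: smat_def vec_eq_iff distrib_left)

lemma smat_diff: "smat s (X - Y) = smat s X - smat s Y"
  by (simp add: smat_def vec_eq_iff right_diff_distrib)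

lemma smat_neg: "smat s (- X) = - smat s X"
  by (simp add: smat_def vec_eq_iff)

lemma transpose_add: "transpose (X + Y) = transpose X + transpose (Y::'a::semiring_1^_^_)"
  by (simp add: transpose_def vec_eq_iff)

lemma transpose_diff: "transpose (X - Y) = transpose X - transpose (Y::'a::ring_1^_^_)"
  by (simp add: transpose_def vec_eq_iff)

lemma transpose_neg: "transpose (- Y) = - transpose (Y::'a::ring_1^_^_)"
  by (simp add: transpose_def vec_eq_iff)

lemma mderiv_add: "mderiv (X + Y) = mderiv X + mderiv Y"
  by (simp add: mderiv_def vec_eq_iff pderiv_add)

lemma mderiv_diff: "mderiv (X - Y) = mderiv X - mderiv Y"
  by (simp add: mderiv_def vec_eq_iff pderiv_diff)

lemma pderiv_sum': "pderiv (\<Sum>i\<in>I. f i) = (\<Sum>i\<in>I. pderiv (f i :: real poly))"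
  by (induction I rule: infinite_finite_induct) (auto simp: pderiv_add)

lemma mderiv_mult: "mderiv (X ** Y) = mderiv X ** Y + X ** mderiv Y"
  by (simp add: mderiv_def matrix_matrix_mult_def vec_eq_iff pderiv_sum' pderiv_mult
      sum.distrib[symmetric] algebra_simps)

lemma mderiv_transpose: "mderiv (transpose X) = transpose (mderiv X)"
  by (simp add: mderiv_def transpose_def vec_eq_iff)

definition dop :: "mpoly2 \<Rightarrow> mpoly2 \<Rightarrow> mpoly2 \<Rightarrow> mpoly2 \<Rightarrow> mpoly2" where
  "dop F0 F1 F2 P = P ** F0 + mderiv P ** F1 + mderiv (mderiv P) ** F2"

lemma dact_dop: "dact [F0, F1, F2] P = dop F0 F1 F2 P"
  by (simp add: dact_def dop_def numeral_3_eq_3 lessThan_Suc)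

lemma generic_sym:
  fixes S sig :: "real poly" and Wt F0 F1 F2 A B P Q :: mpoly2
  assumes e1: "F2 ** Wt = smat S A"
    and e2: "Wt ** transpose F2 = smat S A"
    and e3: "smat S (mderiv A + B) - smat sig A = F1 ** Wt"
    and e4: "smat S (B - mderiv A) + smat sig A = - (Wt ** transpose F1)"
    and e5: "smat S (mderiv B) - smat sig B = F0 ** Wt - Wt ** transpose F0"
  defines "C \<equiv> mderiv P ** A ** transpose Q - P ** A ** transpose (mderiv Q) + P ** B ** transpose Q"
  shows "dop F0 F1 F2 P ** Wt ** transpose Q - P ** Wt ** transpose (dop F0 F1 F2 Q)
         = smat S (mderiv C) - smat sig C"
proof -
  let ?P1 = "mderiv P" and ?P2 = "mderiv (mderiv P)"
  let ?Q1 = "mderiv Q" and ?Q2 = "mderiv (mderiv Q)"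
  have "smat S (mderiv C) - smat sig C =
     ?P2 ** (smat S A) ** transpose Q
     + ?P1 ** (smat S (mderiv A + B) - smat sig A) ** transpose Q
     + P ** (smat S (mderiv B) - smat sig B) ** transpose Q
     + P ** (smat S (B - mderiv A) + smat sig A) ** transpose ?Q1
     - P ** (smat S A) ** transpose ?Q2"
    unfolding C_def
    by (simp add: mderiv_add mderiv_diff mderiv_mult mderiv_transpose smat_add smat_diff
        smat_mult_l smat_mult_r matrix_add_ldistrib matrix_add_rdistrib matrix_diff_ldistrib
        matrix_diff_rdistrib matrix_mul_assoc algebra_simps)
  also have "\<dots> = ?P2 ** (F2 ** Wt) ** transpose Q + ?P1 ** (F1 ** Wt) ** transpose Q
     + P ** (F0 ** Wt - Wt ** transpose F0) ** transpose Q
     + P ** (- (Wt ** transpose F1)) ** transpose ?Q1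
     - P ** (Wt ** transpose F2) ** transpose ?Q2"
    by (simp only: e1 e2 e3 e4 e5)
  also have "\<dots> = dop F0 F1 F2 P ** Wt ** transpose Q - P ** Wt ** transpose (dop F0 F1 F2 Q)"
    unfolding dop_def
    by (simp add: transpose_add matrix_transpose_mul matrix_add_ldistrib matrix_add_rdistrib
        matrix_diff_ldistrib matrix_diff_rdistrib matrix_neg_l matrix_neg_r matrix_mul_assoc algebra_simps)
  finally show ?thesis by simp
qed



definition Wtp :: "real \<Rightarrow> real \<Rightarrow> real \<Rightarrow> mpoly2" where
  "Wtp \<alpha> \<beta> v = (\<chi> i j.
     if i = j then
       (if i = 1 then [:\<alpha> + 1, - ((\<alpha> + v + \<beta>) + 2), v * ((\<alpha> + v + \<beta>) + 2) / (\<alpha> + v - \<beta>):]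
        else [:\<alpha> + 1, - ((\<alpha> - v + \<beta>) + 2), - v * ((\<alpha> - v + \<beta>) + 2) / (\<alpha> - v - \<beta>):])
     else [:- (\<alpha> + 1), \<alpha> + \<beta> + 2:])"

lemma meval_Wtp: "meval (Wtp \<alpha> \<beta> v) t = Wtil \<alpha> \<beta> v t"
  by (simp add: meval_def Wtp_def Wtil_def vec_eq_iff algebra_simps power2_eq_square)

definition Lm :: "real \<Rightarrow> real \<Rightarrow> mpoly2 \<Rightarrow> real^2^2" where
  "Lm \<alpha> \<beta> X = (\<chi> i j. Lf \<alpha> \<beta> (X $ i $ j))"

definition Eij :: "2 \<Rightarrow> 2 \<Rightarrow> real^2^2" where
  "Eij i j = (\<chi> k l. if k = i \<and> l = j then 1 else 0)"

lemma mat_decomp: "(M::real^2^2) = (\<Sum>i\<in>UNIV. \<Sum>j\<in>UNIV. M $ i $ j *\<^sub>R Eij i j)"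
  by (simp add: vec_eq_iff Eij_def sum2 forall2)

lemma int_Lm:
  assumes "\<alpha> > -1" "\<beta> > -1"
  shows "((\<lambda>t. wf \<alpha> \<beta> t *\<^sub>R meval X t) has_integral Lm \<alpha> \<beta> X) {0..1}"
proof -
  have "((\<lambda>t. \<Sum>i\<in>UNIV. \<Sum>j\<in>UNIV. (poly (X$i$j) t * wf \<alpha> \<beta> t) *\<^sub>R Eij i j) has_integral
        (\<Sum>i\<in>UNIV. \<Sum>j\<in>UNIV. Lf \<alpha> \<beta> (X$i$j) *\<^sub>R Eij i j)) {0..1}"
    by (intro has_integral_sum has_integral_scaleR_left int_Lf assms) auto
  moreover have "(\<lambda>t. \<Sum>i\<in>UNIV. \<Sum>j\<in>UNIV. (poly (X$i$j) t * wf \<alpha> \<beta> t) *\<^sub>R Eij i j)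
      = (\<lambda>t. wf \<alpha> \<beta> t *\<^sub>R meval X t)"
    by (rule ext) (simp add: vec_eq_iff Eij_def sum2 forall2 meval_def)
  moreover have "(\<Sum>i\<in>UNIV. \<Sum>j\<in>UNIV. Lf \<alpha> \<beta> (X$i$j) *\<^sub>R Eij i j) = Lm \<alpha> \<beta> X"
    by (simp add: vec_eq_iff Eij_def sum2 forall2 Lm_def)
  ultimately show ?thesis by simp
qed

lemma sc_r: "(A::real^2^2) ** (k *\<^sub>R B) = k *\<^sub>R (A ** B)"
  by (simp add: matrix_matrix_mult_def vec_eq_iff sum_distrib_left mult_ac)
lemma sc_l: "(k *\<^sub>R (A::real^2^2)) ** B = k *\<^sub>R (A ** B)"
  by (simp add: matrix_matrix_mult_def vec_eq_iff sum_distrib_left mult_ac)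

lemma mip_Lm:
  assumes "\<alpha> > -1" "\<beta> > -1"
  shows "mip \<alpha> \<beta> v P Q = Lm \<alpha> \<beta> (P ** Wtp \<alpha> \<beta> v ** transpose Q)"
proof -
  have eq: "(\<lambda>t. meval P t ** Wgt \<alpha> \<beta> v t ** transpose (meval Q t))
       = (\<lambda>t. wf \<alpha> \<beta> t *\<^sub>R meval (P ** Wtp \<alpha> \<beta> v ** transpose Q) t)"
    by (rule ext) (simp only: meval_mult meval_transpose meval_Wtp Wgt_def wf_def
        sc_r sc_l)
  show ?thesis unfolding mip_def eq by (rule integral_unique[OF int_Lm[OF assms]])
qed

lemma Lm_add: assumes "\<alpha> > -1" "\<beta> > -1"
  shows "Lm \<alpha> \<beta> (X + Y) = Lm \<alpha> \<beta> X + Lm \<alpha> \<beta> Y"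
  by (simp add: Lm_def vec_eq_iff Lf_add[OF assms])

lemma Lm_diff: assumes "\<alpha> > -1" "\<beta> > -1"
  shows "Lm \<alpha> \<beta> (X - Y) = Lm \<alpha> \<beta> X - Lm \<alpha> \<beta> Y"
  by (simp add: Lm_def vec_eq_iff Lf_diff[OF assms])

definition cmat :: "real^2^2 \<Rightarrow> mpoly2" where
  "cmat M = (\<chi> i j. [:M $ i $ j:])"

lemma Lm_cmat: assumes "\<alpha> > -1" "\<beta> > -1"
  shows "Lm \<alpha> \<beta> (cmat M ** X) = M ** Lm \<alpha> \<beta> X"
  by (simp add: Lm_def cmat_def vec_eq_iff matrix_matrix_mult_def Lf_sum[OF assms] Lf_smult[OF assms])

lemma Lm_Phi: assumes "\<alpha> > -1" "\<beta> > -1"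
  shows "Lm \<alpha> \<beta> (smat Sp (mderiv C) - smat (sigp \<alpha> \<beta>) C) = 0"
proof -
  have "(smat Sp (mderiv C) - smat (sigp \<alpha> \<beta>) C) $ i $ j = Phi \<alpha> \<beta> (C $ i $ j)" for i j
    by (simp add: smat_def mderiv_def Phi_def)
  then show ?thesis by (simp add: Lm_def vec_eq_iff Lf_Phi[OF assms])
qed

lemma mip_sym:
  assumes "\<alpha> > -1" "\<beta> > -1"
    and e1: "F2 ** Wtp \<alpha> \<beta> v = smat Sp A"
    and e2: "Wtp \<alpha> \<beta> v ** transpose F2 = smat Sp A"
    and e3: "smat Sp (mderiv A + B) - smat (sigp \<alpha> \<beta>) A = F1 ** Wtp \<alpha> \<beta> v"
    and e4: "smat Sp (B - mderiv A) + smat (sigp \<alpha> \<beta>) A = - (Wtp \<alpha> \<beta> v ** transpose F1)"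
    and e5: "smat Sp (mderiv B) - smat (sigp \<alpha> \<beta>) B = F0 ** Wtp \<alpha> \<beta> v - Wtp \<alpha> \<beta> v ** transpose F0"
  shows "mip \<alpha> \<beta> v (dop F0 F1 F2 P) Q = mip \<alpha> \<beta> v P (dop F0 F1 F2 Q)"
proof -
  have "mip \<alpha> \<beta> v (dop F0 F1 F2 P) Q - mip \<alpha> \<beta> v P (dop F0 F1 F2 Q) =
     Lm \<alpha> \<beta> (dop F0 F1 F2 P ** Wtp \<alpha> \<beta> v ** transpose Q - P ** Wtp \<alpha> \<beta> v ** transpose (dop F0 F1 F2 Q))"
    by (simp add: mip_Lm[OF assms(1,2)] Lm_diff[OF assms(1,2)])
  also have "\<dots> = 0"
    by (subst generic_sym[OF e1 e2 e3 e4 e5]) (rule Lm_Phi[OF assms(1,2)])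
  finally show ?thesis by simp
qed



lemma deg_d1:
  fixes p f :: "real poly"
  assumes "degree p \<le> n" "degree f \<le> 1"
  shows "degree (pderiv p * f) \<le> n"
proof (cases "degree p = 0")
  case True then have "pderiv p = 0" by (simp add: pderiv_eq_0_iff)
  then show ?thesis by simp
next
  case False
  have "degree (pderiv p * f) \<le> degree (pderiv p) + degree f" by (rule degree_mult_le)
  also have "\<dots> \<le> (degree p - 1) + 1" using assms by (simp add: degree_pderiv)
  also have "\<dots> = degree p" using False by simp
  finally show ?thesis using assms by simp
qed

lemma deg_d2:
  fixes p f :: "real poly"
  assumes "degree p \<le> n" "degree f \<le> 2"
  shows "degree (pderiv (pderiv p) * f) \<le> n"
proof (cases "degree p \<le> 1")
  case True then have "degree (pderiv p) = 0" by (simp add: degree_pderiv)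
  then have "pderiv (pderiv p) = 0" by (simp add: pderiv_eq_0_iff)
  then show ?thesis by simp
next
  case False
  have "degree (pderiv (pderiv p) * f) \<le> degree (pderiv (pderiv p)) + degree f" by (rule degree_mult_le)
  also have "\<dots> \<le> (degree p - 1 - 1) + 2" using assms by (simp add: degree_pderiv)
  also have "\<dots> = degree p" using False by simp
  finally show ?thesis using assms by simp
qed

lemma deg_d0:
  fixes p f :: "real poly"
  assumes "degree p \<le> n" "degree f \<le> 0"
  shows "degree (p * f) \<le> n"
  using degree_mult_le[of p f] assms by simp

lemma mdeg_dop:
  assumes "mdeg_le F0 0" "mdeg_le F1 1" "mdeg_le F2 2" "mdeg_le P n"
  shows "mdeg_le (dop F0 F1 F2 P) n"
  unfolding mdeg_le_def
proof (intro allI)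
  fix i j
  have a: "degree ((P ** F0) $ i $ j) \<le> n"
    unfolding matrix_matrix_mult_def
    using assms by (auto simp: mdeg_le_def intro!: degree_sum_le deg_d0)
  have b: "degree ((mderiv P ** F1) $ i $ j) \<le> n"
    unfolding matrix_matrix_mult_def
    using assms by (auto simp: mdeg_le_def mderiv_def intro!: degree_sum_le deg_d1)
  have c: "degree ((mderiv (mderiv P) ** F2) $ i $ j) \<le> n"
    unfolding matrix_matrix_mult_def
    using assms by (auto simp: mdeg_le_def mderiv_def intro!: degree_sum_le deg_d2)
  show "degree (dop F0 F1 F2 P $ i $ j) \<le> n"
    unfolding dop_def using a b c by (simp add: degree_add_le)
qed

lemma mip_diff_l: assumes "\<alpha> > -1" "\<beta> > -1"
  shows "mip \<alpha> \<beta> v (X - Y) Q = mip \<alpha> \<beta> v X Q - mip \<alpha> \<beta> v Y Q"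
  by (simp add: mip_Lm[OF assms] matrix_diff_rdistrib Lm_diff[OF assms])

lemma mip_cmat_l: assumes "\<alpha> > -1" "\<beta> > -1"
  shows "mip \<alpha> \<beta> v (cmat M ** X) Q = M ** mip \<alpha> \<beta> v X Q"
  by (simp add: mip_Lm[OF assms] matrix_mul_assoc[symmetric] Lm_cmat[OF assms])

lemma wf_nonneg: "wf \<alpha> \<beta> t \<ge> 0" by (simp add: wf_def)

lemma wf_pos: "0 < t \<Longrightarrow> t < 1 \<Longrightarrow> wf \<alpha> \<beta> t > 0" by (simp add: wf_def)

lemma poly_quad:
  fixes R :: mpoly2
  shows "poly ((R ** Wtp \<alpha> \<beta> v ** transpose R) $ i $ i) t =
   (\<chi> a. poly (R $ i $ a) t) \<bullet> (Wtil \<alpha> \<beta> v t *v (\<chi> a. poly (R $ i $ a) t))"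
proof -
  have Wsym: "Wtil \<alpha> \<beta> v t $ 1 $ 2 = Wtil \<alpha> \<beta> v t $ 2 $ 1" by (simp add: Wtil_def)
  have "poly ((R ** Wtp \<alpha> \<beta> v ** transpose R) $ i $ i) t = (meval (R ** Wtp \<alpha> \<beta> v ** transpose R) t) $ i $ i"
    by (simp add: meval_def)
  also have "\<dots> = (meval R t ** Wtil \<alpha> \<beta> v t ** transpose (meval R t)) $ i $ i"
    by (simp add: meval_mult meval_transpose meval_Wtp)
  also have "\<dots> = (\<chi> a. poly (R $ i $ a) t) \<bullet> (Wtil \<alpha> \<beta> v t *v (\<chi> a. poly (R $ i $ a) t))"
    using Wsym by (simp add: matrix_matrix_mult_def matrix_vector_mult_def inner_vec_def transpose_def
        meval_def sum_distrib_left sum_distrib_right sum2 algebra_simps)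
  finally show ?thesis .
qed

lemma definite:
  assumes ab: "\<alpha> > -1" "\<beta> > -1"
    and pd: "\<And>t x. 0 < t \<Longrightarrow> t < 1 \<Longrightarrow> x \<noteq> 0 \<Longrightarrow> x \<bullet> (Wtil \<alpha> \<beta> v t *v x) > 0"
    and z: "mip \<alpha> \<beta> v R R = 0"
  shows "R = 0"
proof -
  have psd: "x \<bullet> (Wtil \<alpha> \<beta> v t *v x) \<ge> 0" if "0 < t" "t < 1" for t x
    using pd[OF that, of x] by (cases "x = 0") auto
  have row0: "R $ i $ a = 0" for i a
  proof -
    define p where "p = (R ** Wtp \<alpha> \<beta> v ** transpose R) $ i $ i"
    define f where "f = (\<lambda>t. poly p t * wf \<alpha> \<beta> t)"
    have "Lf \<alpha> \<beta> p = 0" using z by (simp add: mip_Lm[OF ab] Lm_def vec_eq_iff p_def)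
    then have fint: "(f has_integral 0) {0..1}" using int_Lf[OF ab, of p] by (simp add: f_def)
    have fnn: "f t \<ge> 0" if "t \<in> {0..1}" for t
    proof (cases "t = 0 \<or> t = 1")
      case True then show ?thesis by (auto simp: f_def wf_def)
    next
      case False
      with that have "0 < t" "t < 1" by auto
      then show ?thesis unfolding f_def p_def poly_quad
        by (intro mult_nonneg_nonneg psd wf_nonneg)
    qed
    have fint2: "f integrable_on {1/4..3/4}"
      by (rule integrable_subinterval_real[of _ 0 1]) (use fint in auto)
    have "integral {1/4..3/4} f \<le> integral {0..1} f"
      by (rule integral_subset_le) (use fint fint2 fnn in auto)
    moreover have "integral {1/4..3/4} f \<ge> 0"
      by (rule integral_nonneg[OF fint2]) (use fnn in auto)
    ultimately have "integral {1/4..3/4} f = 0" using fint by (simp add: integral_unique)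
    then have fint3: "(f has_integral 0) (cbox (1/4) (3/4))"
      using fint2 by (metis box_real(2) has_integral_integral)
    have fcont: "continuous_on (cbox (1/4) (3/4)) f"
      unfolding f_def wf_def box_real(2) by (intro continuous_intros) auto
    have f0: "f t = 0" if "t \<in> {1/4..3/4}" for t
      by (rule has_integral_0_cbox_imp_0[OF fcont _ fint3]) (use fnn that in auto)
    then have rz: "(\<chi> a. poly (R $ i $ a) t) = 0" if "t \<in> {1/4..3/4}" for t
    proof -
      have t: "0 < t" "t < 1" using that by auto
      have pp: "poly p t = 0" using f0[OF that] wf_pos[OF t, of \<alpha> \<beta>] by (simp add: f_def)
      show ?thesis
      proof (rule ccontr)
        assume "(\<chi> a. poly (R $ i $ a) t) \<noteq> 0"
        from pd[OF t this] pp show False unfolding p_def poly_quad by simp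
      qed
    qed
    have "poly (R $ i $ a) t = 0" if "t \<in> {1/4..3/4}" for t
    proof -
      have "(\<chi> a. poly (R $ i $ a) t) $ a = (0::real^2) $ a" using rz[OF that] by simp
      then show ?thesis by simp
    qed
    then have "{1/4..3/4::real} \<subseteq> {t. poly (R $ i $ a) t = 0}" by auto
    moreover have "infinite {1/4..3/4::real}" by (simp add: infinite_Icc)
    ultimately have "infinite {t. poly (R $ i $ a) t = 0}" using finite_subset by blast
    then show ?thesis using poly_roots_finite by blast
  qed
  then show ?thesis by (simp add: vec_eq_iff)
qed



lemma coeff_cmat_mult: "coeff ((cmat M ** P) $ i $ j) k = (\<Sum>l\<in>UNIV. M $ i $ l * coeff (P $ l $ j) k)"
  by (simp add: cmat_def matrix_matrix_mult_def coeff_sum)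

theorem DW_member:
  assumes ab: "\<alpha> > -1" "\<beta> > -1"
    and pd: "\<And>t x. 0 < t \<Longrightarrow> t < 1 \<Longrightarrow> x \<noteq> 0 \<Longrightarrow> x \<bullet> (Wtil \<alpha> \<beta> v t *v x) > 0"
    and e1: "F2 ** Wtp \<alpha> \<beta> v = smat Sp A"
    and e2: "Wtp \<alpha> \<beta> v ** transpose F2 = smat Sp A"
    and e3: "smat Sp (mderiv A + B) - smat (sigp \<alpha> \<beta>) A = F1 ** Wtp \<alpha> \<beta> v"
    and e4: "smat Sp (B - mderiv A) + smat (sigp \<alpha> \<beta>) A = - (Wtp \<alpha> \<beta> v ** transpose F1)"
    and e5: "smat Sp (mderiv B) - smat (sigp \<alpha> \<beta>) B = F0 ** Wtp \<alpha> \<beta> v - Wtp \<alpha> \<beta> v ** transpose F0"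
    and d0: "mdeg_le F0 0" and d1: "mdeg_le F1 1" and d2: "mdeg_le F2 2"
  shows "[F0, F1, F2] \<in> DW \<alpha> \<beta> v"
  unfolding DW_def
proof (intro CollectI allI impI)
  fix n P assume mop: "is_MOP \<alpha> \<beta> v n P"
  define D where "D = dop F0 F1 F2"
  have sym: "mip \<alpha> \<beta> v (D X) Y = mip \<alpha> \<beta> v X (D Y)" for X Y
    unfolding D_def by (rule mip_sym[OF ab e1 e2 e3 e4 e5])
  have dD: "mdeg_le X m \<Longrightarrow> mdeg_le (D X) m" for X m
    unfolding D_def by (rule mdeg_dop[OF d0 d1 d2])
  have Pdeg: "mdeg_le P n" and Plead: "mcoeff P n = mat 1"
    and orth: "\<And>Q. (\<forall>i j. degree (Q $ i $ j) < n) \<Longrightarrow> mip \<alpha> \<beta> v P Q = 0"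
    using mop unfolding is_MOP_def by auto
  define \<Lambda> where "\<Lambda> = mcoeff (D P) n"
  define R where "R = D P - cmat \<Lambda> ** P"
  have DPdeg: "mdeg_le (D P) n" using dD[OF Pdeg] .
  have Rc: "coeff (R $ i $ j) k = 0" if "n \<le> k" for i j k
  proof (cases "k = n")
    case True
    have "coeff ((D P) $ i $ j) n = \<Lambda> $ i $ j" by (simp add: \<Lambda>_def mcoeff_def)
    moreover have "coeff ((cmat \<Lambda> ** P) $ i $ j) n = \<Lambda> $ i $ j"
    proof -
      have "coeff (P $ l $ j) n = (mat 1 :: real^2^2) $ l $ j" for l
        using Plead by (simp add: mcoeff_def vec_eq_iff)
      then show ?thesis by (simp add: coeff_cmat_mult mat_def sum2 forall2) (metis exhaust_2)
    qed
    ultimately show ?thesis using True by (simp add: R_def)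
  next
    case False
    with that have k: "n < k" by simp
    have "coeff ((D P) $ i $ j) k = 0"
      using DPdeg k unfolding mdeg_le_def by (meson coeff_eq_0 order.strict_trans1)
    moreover have "coeff (P $ l $ j) k = 0" for l
      using Pdeg k unfolding mdeg_le_def by (meson coeff_eq_0 order.strict_trans1)
    ultimately show ?thesis by (simp add: R_def coeff_cmat_mult)
  qed
  have R0: "R = 0"
  proof (cases "n = 0")
    case True
    then show ?thesis using Rc by (simp add: vec_eq_iff poly_eq_iff)
  next
    case False
    have Rdeg: "mdeg_le R (n - 1)"
      unfolding mdeg_le_def using Rc False by (auto intro!: degree_le)
    have lt: "mdeg_le X (n - 1) \<Longrightarrow> \<forall>i j. degree (X $ i $ j) < n" for X
      using False unfolding mdeg_le_def by (meson diff_less le_less_trans not_gr_zero zero_less_one)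
    have "mip \<alpha> \<beta> v R R = mip \<alpha> \<beta> v (D P) R - \<Lambda> ** mip \<alpha> \<beta> v P R"
      unfolding R_def by (simp add: mip_diff_l[OF ab] mip_cmat_l[OF ab])
    also have "\<dots> = mip \<alpha> \<beta> v P (D R) - \<Lambda> ** mip \<alpha> \<beta> v P R" by (simp add: sym)
    also have "\<dots> = 0"
      using orth[OF lt[OF Rdeg]] orth[OF lt[OF dD[OF Rdeg]]] by simp
    finally have "mip \<alpha> \<beta> v R R = 0" .
    then show ?thesis using definite[OF ab pd] by blast
  qed
  then have "D P = cmat \<Lambda> ** P" by (simp add: R_def)
  then show "\<exists>\<Lambda>::real^2^2. dact [F0, F1, F2] P = (\<chi> i j. [:\<Lambda> $ i $ j:]) ** P"
    by (auto simp: dact_dop D_def cmat_def)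
qed



lemma param_facts:
  fixes \<alpha> \<beta> v :: real
  assumes "\<alpha> > -1" and "\<beta> > -1"
    and "\<bar>\<alpha> - \<beta>\<bar> < \<bar>v\<bar>" and "\<bar>v\<bar> < \<alpha> + \<beta> + 2"
  shows "v \<noteq> 0" "(\<alpha> + v - \<beta>) * (\<alpha> - v - \<beta>) < 0" "\<alpha> + v - \<beta> \<noteq> 0" "\<alpha> - v - \<beta> \<noteq> 0"
    "\<alpha> + v + \<beta> + 2 > 0" "\<alpha> - v + \<beta> + 2 > 0" "\<alpha> + \<beta> - v + 4 > 0" "\<alpha> + \<beta> + v + 4 > 0"
proof -
  show "v \<noteq> 0" using assms by auto
  have "(\<alpha> + v - \<beta>) * (\<alpha> - v - \<beta>) = (\<alpha> - \<beta>)^2 - v^2" by (simp add: algebra_simps power2_eq_square)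
  also have "\<dots> < 0"
  proof -
    have "\<bar>\<alpha> - \<beta>\<bar>^2 < \<bar>v\<bar>^2" using assms(3) by (intro power_strict_mono) auto
    then show ?thesis by simp
  qed
  finally show neg: "(\<alpha> + v - \<beta>) * (\<alpha> - v - \<beta>) < 0" .
  show "\<alpha> + v - \<beta> \<noteq> 0" "\<alpha> - v - \<beta> \<noteq> 0" using neg by auto
  show "\<alpha> + v + \<beta> + 2 > 0" "\<alpha> - v + \<beta> + 2 > 0" "\<alpha> + \<beta> - v + 4 > 0" "\<alpha> + \<beta> + v + 4 > 0"
    using assms(4) by (auto simp: abs_if split: if_splits)
qed

lemma Wtil_pd:
  fixes \<alpha> \<beta> v :: real
  assumes "\<alpha> > -1" and "\<beta> > -1"
    and "\<bar>\<alpha> - \<beta>\<bar> < \<bar>v\<bar>" and "\<bar>v\<bar> < \<alpha> + \<beta> + 2"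
    and t: "0 < t" "t < 1" and x: "x \<noteq> 0"
  shows "x \<bullet> (Wtil \<alpha> \<beta> v t *v x) > 0"
proof -
  note pf = param_facts[OF assms(1-4)]
  define K1 where "K1 = \<alpha> + v - \<beta>"
  define K2 where "K2 = \<alpha> - v - \<beta>"
  define K3 where "K3 = \<alpha> + v + \<beta> + 2"
  define K4 where "K4 = \<alpha> - v + \<beta> + 2"
  have K: "K1 \<noteq> 0" "K2 \<noteq> 0" "K1 * K2 < 0" "K3 > 0" "K4 > 0" "v \<noteq> 0"
    using pf by (auto simp: K1_def K2_def K3_def K4_def)
  define fa where "fa s = v * K3 / K1 * s^2 - K3 * s + (\<alpha> + 1)" for s
  define fb where "fb s = (\<alpha> + \<beta> + 2) * s - (\<alpha> + 1)" for s
  define fc where "fc s = - v * K4 / K2 * s^2 - K4 * s + (\<alpha> + 1)" for s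
  have W: "Wtil \<alpha> \<beta> v s $ 1 $ 1 = fa s" "Wtil \<alpha> \<beta> v s $ 1 $ 2 = fb s"
      "Wtil \<alpha> \<beta> v s $ 2 $ 1 = fb s" "Wtil \<alpha> \<beta> v s $ 2 $ 2 = fc s" for s
    by (simp_all add: Wtil_def fa_def fb_def fc_def K1_def K2_def K3_def K4_def algebra_simps)
  have det: "(fa s * fc s - fb s ^ 2) * (K1 * K2) = - (v^2 * K3 * K4 * s^2 * (1 - s)^2)" for s
  proof -
    have fa1: "fa s * K1 = v * K3 * s ^ 2 - K3 * K1 * s + (\<alpha> + 1) * K1" using K(1) by (simp add: fa_def field_simps)
    have fc1: "fc s * K2 = - v * K4 * s ^ 2 - K4 * K2 * s + (\<alpha> + 1) * K2" using K(2) by (simp add: fc_def field_simps)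
    have "(fa s * fc s - fb s ^ 2) * (K1 * K2) = (fa s * K1) * (fc s * K2) - fb s ^ 2 * (K1 * K2)"
      by (simp add: algebra_simps)
    also have "\<dots> = (v * K3 * s ^ 2 - K3 * K1 * s + (\<alpha> + 1) * K1) * (- v * K4 * s ^ 2 - K4 * K2 * s + (\<alpha> + 1) * K2) - fb s ^ 2 * (K1 * K2)"
      by (simp only: fa1 fc1)
    also have "\<dots> = - (v^2 * K3 * K4 * s^2 * (1 - s)^2)"
      unfolding fb_def K1_def K2_def K3_def K4_def by algebra
    finally show ?thesis .
  qed
  have detpos: "fa s * fc s - fb s ^ 2 > 0" if "0 < s" "s < 1" for s
  proof -
    have "v^2 * K3 * K4 * s^2 * (1 - s)^2 > 0" using K that by simp
    then have "(fa s * fc s - fb s ^ 2) * (K1 * K2) < 0" unfolding det by simp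
    then show ?thesis using K(3) by (simp add: mult_less_0_iff)
  qed
  have fapos: "fa t > 0"
  proof (rule ccontr)
    assume "\<not> fa t > 0"
    then have "fa t \<le> 0" by simp
    moreover have "0 \<le> fa 0" using assms(1) by (simp add: fa_def)
    moreover have "continuous_on {0..t} fa" unfolding fa_def by (intro continuous_intros)
    ultimately obtain s where s: "0 \<le> s" "s \<le> t" "fa s = 0"
      using IVT2'[of fa t 0 0] t by auto
    have "s \<noteq> 0" using s assms(1) by (auto simp: fa_def)
    then have "0 < s" "s < 1" using s t by auto
    from detpos[OF this] s(3) show False by simp
  qed
  have q: "x \<bullet> (Wtil \<alpha> \<beta> v t *v x) = fa t * (x$1)^2 + 2 * fb t * (x$1) * (x$2) + fc t * (x$2)^2"
    by (simp add: inner_vec_def matrix_vector_mult_def sum2 W algebra_simps power2_eq_square)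
  have key: "fa t * (fa t * (x$1)^2 + 2 * fb t * (x$1) * (x$2) + fc t * (x$2)^2)
      = (fa t * x$1 + fb t * x$2)^2 + (fa t * fc t - fb t ^ 2) * (x$2)^2"
    by (simp add: algebra_simps power2_eq_square)
  have "(fa t * x$1 + fb t * x$2)^2 + (fa t * fc t - fb t ^ 2) * (x$2)^2 > 0"
  proof (cases "x$2 = 0")
    case True
    then have "x$1 \<noteq> 0" using x by (metis exhaust_2 vec_eq_iff zero_index)
    then show ?thesis using True fapos by simp
  next
    case False
    then show ?thesis using detpos[OF t] by (simp add: add_nonneg_pos)
  qed
  then have "fa t * (x \<bullet> (Wtil \<alpha> \<beta> v t *v x)) > 0" unfolding q key .
  then show ?thesis using fapos by (simp add: zero_less_mult_iff)
qed



definition mk2 :: "real poly \<Rightarrow> real poly \<Rightarrow> real poly \<Rightarrow> real poly \<Rightarrow> mpoly2" where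
  "mk2 a b c d = (\<chi> i j. if i = 1 then (if j = 1 then a else b) else (if j = 1 then c else d))"

lemma two_ne: "(1::2) \<noteq> 2" by simp

lemma mk2_nth [simp]: "mk2 a b c d $ 1 $ 1 = a" "mk2 a b c d $ 1 $ 2 = b"
   "mk2 a b c d $ 2 $ 1 = c" "mk2 a b c d $ 2 $ 2 = d"
  by (simp_all add: mk2_def)

lemma mk2_eq: "X = mk2 (X$1$1) (X$1$2) (X$2$1) (X$2$2)"
  unfolding mk2_def vec_eq_iff forall2 by simp

lemma mk2_eq_iff: "mk2 a b c d = mk2 a' b' c' d' \<longleftrightarrow> a = a' \<and> b = b' \<and> c = c' \<and> d = d'"
  unfolding mk2_def vec_eq_iff forall2 by simp

lemma mk2_mult: "mk2 a b c d ** mk2 e f g h = mk2 (a*e + b*g) (a*f + b*h) (c*e + d*g) (c*f + d*h)"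
  by (subst mk2_eq) (simp add: matrix_matrix_mult_def sum2)

lemma mk2_transpose: "transpose (mk2 a b c d) = mk2 a c b d"
  by (subst mk2_eq) (simp add: transpose_def)

lemma mk2_add: "mk2 a b c d + mk2 e f g h = mk2 (a+e) (b+f) (c+g) (d+h)"
  by (subst mk2_eq) simp

lemma mk2_diff: "mk2 a b c d - mk2 e f g h = mk2 (a-e) (b-f) (c-g) (d-h)"
  by (subst mk2_eq) simp

lemma mk2_neg: "- mk2 a b c d = mk2 (-a) (-b) (-c) (-d)"
  by (subst mk2_eq) simp

lemma mk2_smat: "smat s (mk2 a b c d) = mk2 (s*a) (s*b) (s*c) (s*d)"
  by (subst mk2_eq) (simp add: smat_def)

lemma mk2_mderiv: "mderiv (mk2 a b c d) = mk2 (pderiv a) (pderiv b) (pderiv c) (pderiv d)"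
  by (subst mk2_eq) (simp add: mderiv_def)

lemma mk2_mdeg: "mdeg_le (mk2 a b c d) n \<longleftrightarrow> degree a \<le> n \<and> degree b \<le> n \<and> degree c \<le> n \<and> degree d \<le> n"
  unfolding mdeg_le_def forall2 by simp

lemmas mk2_simps = mk2_mult mk2_transpose mk2_add mk2_diff mk2_neg mk2_smat mk2_mderiv mk2_eq_iff

definition w11 where "w11 \<alpha> \<beta> v = [:\<alpha> + 1, - ((\<alpha> + v + \<beta>) + 2), v * ((\<alpha> + v + \<beta>) + 2) / (\<alpha> + v - \<beta>):]"
definition w12 where "w12 \<alpha> \<beta> = [:- (\<alpha> + 1), \<alpha> + \<beta> + 2:]"
definition w22 where "w22 \<alpha> \<beta> v = [:\<alpha> + 1, - ((\<alpha> - v + \<beta>) + 2), - v * ((\<alpha> - v + \<beta>) + 2) / (\<alpha> - v - \<beta>):]"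

lemma Wtp_mk2: "Wtp \<alpha> \<beta> v = mk2 (w11 \<alpha> \<beta> v) (w12 \<alpha> \<beta>) (w12 \<alpha> \<beta>) (w22 \<alpha> \<beta> v)"
  by (subst mk2_eq) (simp add: Wtp_def w11_def w12_def w22_def)

lemma Wtp_K:
  assumes "K1 = \<alpha> + v - \<beta>" "K2 = \<alpha> - v - \<beta>"
  shows "Wtp \<alpha> \<beta> v = mk2 [:\<alpha> + 1, - (\<alpha> + v + \<beta> + 2), v * (\<alpha> + v + \<beta> + 2) / K1:]
     [:- (\<alpha> + 1), \<alpha> + \<beta> + 2:] [:- (\<alpha> + 1), \<alpha> + \<beta> + 2:]
     [:\<alpha> + 1, - (\<alpha> - v + \<beta> + 2), - v * (\<alpha> - v + \<beta> + 2) / K2:]"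
  using assms by (simp add: Wtp_mk2 w11_def w12_def w22_def)

lemma poly_ext_iff: "(p::real poly) = q \<longleftrightarrow> (\<forall>x. poly p x = poly q x)"
  by (auto intro: poly_ext)

definition D1F2 :: mpoly2 where "D1F2 = mk2 [:0, -1, 1:] 0 0 [:0, -1, 1:]"
definition D1F1 :: "real \<Rightarrow> real \<Rightarrow> real \<Rightarrow> mpoly2" where
  "D1F1 \<alpha> \<beta> v = mk2 [:-2 - \<alpha> + (\<alpha> - \<beta>)/v, \<alpha> + \<beta> + 4:] [:-1 + (\<alpha> - \<beta>)/v:]
                  [:-1 - (\<alpha> - \<beta>)/v:] [:-2 - \<alpha> - (\<alpha> - \<beta>)/v, \<alpha> + \<beta> + 4:]"
definition D1F0 :: "real \<Rightarrow> mpoly2" where "D1F0 v = mk2 0 0 0 [:-v:]"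
definition D1A :: "real \<Rightarrow> real \<Rightarrow> real \<Rightarrow> mpoly2" where
  "D1A \<alpha> \<beta> v = - Wtp \<alpha> \<beta> v"
definition D1B :: "real \<Rightarrow> mpoly2" where "D1B v = mk2 0 [:-v:] [:v:] 0"


lemma D1_e1:
  fixes \<alpha> \<beta> v :: real
  assumes K: "\<alpha> + v - \<beta> \<noteq> 0" "\<alpha> - v - \<beta> \<noteq> 0" "v \<noteq> 0"
  shows "D1F2 ** Wtp \<alpha> \<beta> v = smat Sp (D1A \<alpha> \<beta> v)"
proof -
  define K1 where "K1 = \<alpha> + v - \<beta>"
  define K2 where "K2 = \<alpha> - v - \<beta>"
  have KK: "K1 \<noteq> 0" "K2 \<noteq> 0" "v \<noteq> 0" using K by (auto simp: K1_def K2_def)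
  show ?thesis
  unfolding D1A_def Wtp_K[OF K1_def K2_def] D1F2_def D1F1_def D1F0_def D1B_def mk2_simps Sp_def sigp_def
  by (simp add: pderiv_pCons, (insert KK)?, (simp add: field_simps)?, (simp add: K1_def K2_def algebra_simps)?)
qed

lemma D1_e2:
  fixes \<alpha> \<beta> v :: real
  assumes K: "\<alpha> + v - \<beta> \<noteq> 0" "\<alpha> - v - \<beta> \<noteq> 0" "v \<noteq> 0"
  shows "Wtp \<alpha> \<beta> v ** transpose D1F2 = smat Sp (D1A \<alpha> \<beta> v)"
proof -
  define K1 where "K1 = \<alpha> + v - \<beta>"
  define K2 where "K2 = \<alpha> - v - \<beta>"
  have KK: "K1 \<noteq> 0" "K2 \<noteq> 0" "v \<noteq> 0" using K by (auto simp: K1_def K2_def)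
  show ?thesis
  unfolding D1A_def Wtp_K[OF K1_def K2_def] D1F2_def D1F1_def D1F0_def D1B_def mk2_simps Sp_def sigp_def
  by (simp add: pderiv_pCons, (insert KK)?, (simp add: field_simps)?, (simp add: K1_def K2_def algebra_simps)?)
qed

lemma D1_e3:
  fixes \<alpha> \<beta> v :: real
  assumes K: "\<alpha> + v - \<beta> \<noteq> 0" "\<alpha> - v - \<beta> \<noteq> 0" "v \<noteq> 0"
  shows "smat Sp (mderiv (D1A \<alpha> \<beta> v) + D1B v) - smat (sigp \<alpha> \<beta>) (D1A \<alpha> \<beta> v) = D1F1 \<alpha> \<beta> v ** Wtp \<alpha> \<beta> v"
proof -
  define K1 where "K1 = \<alpha> + v - \<beta>"
  define K2 where "K2 = \<alpha> - v - \<beta>"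
  have KK: "K1 \<noteq> 0" "K2 \<noteq> 0" "v \<noteq> 0" using K by (auto simp: K1_def K2_def)
  show ?thesis
  unfolding D1A_def Wtp_K[OF K1_def K2_def] D1F2_def D1F1_def D1F0_def D1B_def mk2_simps Sp_def sigp_def
  by (simp add: pderiv_pCons, (insert KK)?, (simp add: field_simps)?, (simp add: K1_def K2_def algebra_simps)?)
qed

lemma D1_e4:
  fixes \<alpha> \<beta> v :: real
  assumes K: "\<alpha> + v - \<beta> \<noteq> 0" "\<alpha> - v - \<beta> \<noteq> 0" "v \<noteq> 0"
  shows "smat Sp (D1B v - mderiv (D1A \<alpha> \<beta> v)) + smat (sigp \<alpha> \<beta>) (D1A \<alpha> \<beta> v) = - (Wtp \<alpha> \<beta> v ** transpose (D1F1 \<alpha> \<beta> v))"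
proof -
  define K1 where "K1 = \<alpha> + v - \<beta>"
  define K2 where "K2 = \<alpha> - v - \<beta>"
  have KK: "K1 \<noteq> 0" "K2 \<noteq> 0" "v \<noteq> 0" using K by (auto simp: K1_def K2_def)
  show ?thesis
  unfolding D1A_def Wtp_K[OF K1_def K2_def] D1F2_def D1F1_def D1F0_def D1B_def mk2_simps Sp_def sigp_def
  by (simp add: pderiv_pCons, (insert KK)?, (simp add: field_simps)?, (simp add: K1_def K2_def algebra_simps)?)
qed

lemma D1_e5:
  fixes \<alpha> \<beta> v :: real
  assumes K: "\<alpha> + v - \<beta> \<noteq> 0" "\<alpha> - v - \<beta> \<noteq> 0" "v \<noteq> 0"
  shows "smat Sp (mderiv (D1B v)) - smat (sigp \<alpha> \<beta>) (D1B v) = D1F0 v ** Wtp \<alpha> \<beta> v - Wtp \<alpha> \<beta> v ** transpose (D1F0 v)"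
proof -
  define K1 where "K1 = \<alpha> + v - \<beta>"
  define K2 where "K2 = \<alpha> - v - \<beta>"
  have KK: "K1 \<noteq> 0" "K2 \<noteq> 0" "v \<noteq> 0" using K by (auto simp: K1_def K2_def)
  show ?thesis
  unfolding D1A_def Wtp_K[OF K1_def K2_def] D1F2_def D1F1_def D1F0_def D1B_def mk2_simps Sp_def sigp_def
  by (simp add: pderiv_pCons, (insert KK)?, (simp add: field_simps)?, (simp add: K1_def K2_def algebra_simps)?)
qed



lemma zero_eq_pCons_iff: "0 = pCons a p \<longleftrightarrow> a = 0 \<and> p = 0"
  by (metis pCons_eq_0_iff)

lemmas pcons_arith = mult_pCons_left smult_pCons smult_0_right add_pCons diff_pCons minus_pCons
  pderiv_pCons pderiv_0 pCons_eq_iff pCons_eq_0_iff zero_eq_pCons_iff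
  mult_zero_left mult_zero_right add_0_left add_0_right diff_0 diff_0_right minus_zero
  pCons_0_0 simp_thms

definition "kk1 \<alpha> \<beta> v = \<alpha> + v - \<beta>"
definition "kk2 \<alpha> \<beta> v = \<alpha> - v - \<beta>"
definition "kk3 \<alpha> \<beta> v = \<alpha> + v + \<beta> + 2"
definition "kk4 \<alpha> \<beta> v = \<alpha> - v + \<beta> + 2"
definition "gg \<alpha> \<beta> v = kk1 \<alpha> \<beta> v * kk2 \<alpha> \<beta> v * (v * v + (\<alpha> - \<beta>) * (\<alpha> + \<beta> + 2)) * 2"

definition D2F2 :: "real \<Rightarrow> real \<Rightarrow> real \<Rightarrow> mpoly2" where
  "D2F2 \<alpha> \<beta> v = mk2
     [:gg \<alpha> \<beta> v, v * (- 4 * v * kk1 \<alpha> \<beta> v * kk2 \<alpha> \<beta> v):]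
     [:gg \<alpha> \<beta> v, v * (- 4 * kk1 \<alpha> \<beta> v * kk2 \<alpha> \<beta> v * kk3 \<alpha> \<beta> v), v * (4 * v * kk2 \<alpha> \<beta> v * kk3 \<alpha> \<beta> v):]
     [:- gg \<alpha> \<beta> v, v * (- 4 * kk1 \<alpha> \<beta> v * kk2 \<alpha> \<beta> v * kk4 \<alpha> \<beta> v), v * (- 4 * v * kk1 \<alpha> \<beta> v * kk4 \<alpha> \<beta> v):]
     [:- gg \<alpha> \<beta> v, v * (4 * v * kk1 \<alpha> \<beta> v * kk2 \<alpha> \<beta> v):]"

definition D2F1 :: "real \<Rightarrow> real \<Rightarrow> real \<Rightarrow> mpoly2" where
  "D2F1 \<alpha> \<beta> v = mk2
     [:v * (- 4 * kk1 \<alpha> \<beta> v * kk2 \<alpha> \<beta> v * kk3 \<alpha> \<beta> v):]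
     [:v * (- kk1 \<alpha> \<beta> v * kk2 \<alpha> \<beta> v * kk3 \<alpha> \<beta> v * (\<alpha> + \<beta> - v + 4) * 2), v * (4 * v * kk2 \<alpha> \<beta> v * kk3 \<alpha> \<beta> v * (\<alpha> + \<beta> - v + 4)):]
     [:v * (- kk1 \<alpha> \<beta> v * kk2 \<alpha> \<beta> v * kk4 \<alpha> \<beta> v * (\<alpha> + \<beta> + v + 4) * 2), v * (- 4 * v * kk1 \<alpha> \<beta> v * kk4 \<alpha> \<beta> v * (\<alpha> + \<beta> + v + 4)):]
     [:v * (- 4 * kk1 \<alpha> \<beta> v * kk2 \<alpha> \<beta> v * kk4 \<alpha> \<beta> v):]"

definition D2F0 :: "real \<Rightarrow> real \<Rightarrow> real \<Rightarrow> mpoly2" where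
  "D2F0 \<alpha> \<beta> v = mk2 0
     [:v * (kk2 \<alpha> \<beta> v * kk3 \<alpha> \<beta> v * kk4 \<alpha> \<beta> v * v * (\<alpha> + \<beta> - v + 4)):]
     [:v * (- kk1 \<alpha> \<beta> v * kk3 \<alpha> \<beta> v * kk4 \<alpha> \<beta> v * v * (\<alpha> + \<beta> + v + 4)):] 0"

definition "a12 \<alpha> \<beta> v = [:v * (- kk1 \<alpha> \<beta> v * kk2 \<alpha> \<beta> v * kk3 \<alpha> \<beta> v * kk4 \<alpha> \<beta> v * 2), v * (- 4 * (v * v) * kk3 \<alpha> \<beta> v * kk4 \<alpha> \<beta> v), v * (4 * (v * v) * kk3 \<alpha> \<beta> v * kk4 \<alpha> \<beta> v):]"

definition D2A :: "real \<Rightarrow> real \<Rightarrow> real \<Rightarrow> mpoly2" where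
  "D2A \<alpha> \<beta> v = mk2
     [:v * (kk1 \<alpha> \<beta> v * kk2 \<alpha> \<beta> v * kk3 \<alpha> \<beta> v * kk4 \<alpha> \<beta> v * 2), v * (- 4 * v * kk2 \<alpha> \<beta> v * kk3 \<alpha> \<beta> v * kk4 \<alpha> \<beta> v):]
     (a12 \<alpha> \<beta> v) (a12 \<alpha> \<beta> v)
     [:v * (kk1 \<alpha> \<beta> v * kk2 \<alpha> \<beta> v * kk3 \<alpha> \<beta> v * kk4 \<alpha> \<beta> v * 2), v * (4 * v * kk1 \<alpha> \<beta> v * kk3 \<alpha> \<beta> v * kk4 \<alpha> \<beta> v):]"

definition "b12 \<alpha> \<beta> v = [:v * (kk3 \<alpha> \<beta> v * kk4 \<alpha> \<beta> v * v * (v * v + (\<alpha> - \<beta>) * (\<alpha> + \<beta> + 4)) * 2), v * (- 4 * (v * v * v) * kk3 \<alpha> \<beta> v * kk4 \<alpha> \<beta> v):]"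

definition D2B :: "real \<Rightarrow> real \<Rightarrow> real \<Rightarrow> mpoly2" where
  "D2B \<alpha> \<beta> v = mk2 0 (b12 \<alpha> \<beta> v) (- b12 \<alpha> \<beta> v) 0"

lemma D2_e1:
  fixes \<alpha> \<beta> v :: real
  assumes K: "\<alpha> + v - \<beta> \<noteq> 0" "\<alpha> - v - \<beta> \<noteq> 0" "v \<noteq> 0"
  shows "D2F2 \<alpha> \<beta> v ** Wtp \<alpha> \<beta> v = smat Sp (D2A \<alpha> \<beta> v)"
proof -
  define c1 where "c1 = v * (\<alpha> + v + \<beta> + 2) / (\<alpha> + v - \<beta>)"
  define c2 where "c2 = - v * (\<alpha> - v + \<beta> + 2) / (\<alpha> - v - \<beta>)"
  have h1: "c1 * (\<alpha> + v - \<beta>) = v * (\<alpha> + v + \<beta> + 2)" using K unfolding c1_def by simp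
  have h2: "c2 * (\<alpha> - v - \<beta>) = - v * (\<alpha> - v + \<beta> + 2)" using K unfolding c2_def by simp
  have W: "Wtp \<alpha> \<beta> v = mk2 [:\<alpha> + 1, - (\<alpha> + v + \<beta> + 2), c1:]
     [:- (\<alpha> + 1), \<alpha> + \<beta> + 2:] [:- (\<alpha> + 1), \<alpha> + \<beta> + 2:]
     [:\<alpha> + 1, - (\<alpha> - v + \<beta> + 2), c2:]"
    by (simp add: Wtp_mk2 w11_def w12_def w22_def c1_def c2_def)
  show ?thesis
  unfolding W D2F2_def D2F1_def D2F0_def D2A_def D2B_def a12_def b12_def mk2_simps Sp_def sigp_def
    kk1_def kk2_def kk3_def kk4_def gg_def
  apply (simp only: pcons_arith)
  apply (intro conjI)
  apply (use h1 h2 in algebra)+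
  done
qed

lemma D2_e2:
  fixes \<alpha> \<beta> v :: real
  assumes K: "\<alpha> + v - \<beta> \<noteq> 0" "\<alpha> - v - \<beta> \<noteq> 0" "v \<noteq> 0"
  shows "Wtp \<alpha> \<beta> v ** transpose (D2F2 \<alpha> \<beta> v) = smat Sp (D2A \<alpha> \<beta> v)"
proof -
  define c1 where "c1 = v * (\<alpha> + v + \<beta> + 2) / (\<alpha> + v - \<beta>)"
  define c2 where "c2 = - v * (\<alpha> - v + \<beta> + 2) / (\<alpha> - v - \<beta>)"
  have h1: "c1 * (\<alpha> + v - \<beta>) = v * (\<alpha> + v + \<beta> + 2)" using K unfolding c1_def by simp
  have h2: "c2 * (\<alpha> - v - \<beta>) = - v * (\<alpha> - v + \<beta> + 2)" using K unfolding c2_def by simp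
  have W: "Wtp \<alpha> \<beta> v = mk2 [:\<alpha> + 1, - (\<alpha> + v + \<beta> + 2), c1:]
     [:- (\<alpha> + 1), \<alpha> + \<beta> + 2:] [:- (\<alpha> + 1), \<alpha> + \<beta> + 2:]
     [:\<alpha> + 1, - (\<alpha> - v + \<beta> + 2), c2:]"
    by (simp add: Wtp_mk2 w11_def w12_def w22_def c1_def c2_def)
  show ?thesis
  unfolding W D2F2_def D2F1_def D2F0_def D2A_def D2B_def a12_def b12_def mk2_simps Sp_def sigp_def
    kk1_def kk2_def kk3_def kk4_def gg_def
  apply (simp only: pcons_arith)
  apply (intro conjI)
  apply (use h1 h2 in algebra)+
  done
qed

lemma D2_e3:
  fixes \<alpha> \<beta> v :: real
  assumes K: "\<alpha> + v - \<beta> \<noteq> 0" "\<alpha> - v - \<beta> \<noteq> 0" "v \<noteq> 0"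
  shows "smat Sp (mderiv (D2A \<alpha> \<beta> v) + D2B \<alpha> \<beta> v) - smat (sigp \<alpha> \<beta>) (D2A \<alpha> \<beta> v) = D2F1 \<alpha> \<beta> v ** Wtp \<alpha> \<beta> v"
proof -
  define c1 where "c1 = v * (\<alpha> + v + \<beta> + 2) / (\<alpha> + v - \<beta>)"
  define c2 where "c2 = - v * (\<alpha> - v + \<beta> + 2) / (\<alpha> - v - \<beta>)"
  have h1: "c1 * (\<alpha> + v - \<beta>) = v * (\<alpha> + v + \<beta> + 2)" using K unfolding c1_def by simp
  have h2: "c2 * (\<alpha> - v - \<beta>) = - v * (\<alpha> - v + \<beta> + 2)" using K unfolding c2_def by simp
  have W: "Wtp \<alpha> \<beta> v = mk2 [:\<alpha> + 1, - (\<alpha> + v + \<beta> + 2), c1:]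
     [:- (\<alpha> + 1), \<alpha> + \<beta> + 2:] [:- (\<alpha> + 1), \<alpha> + \<beta> + 2:]
     [:\<alpha> + 1, - (\<alpha> - v + \<beta> + 2), c2:]"
    by (simp add: Wtp_mk2 w11_def w12_def w22_def c1_def c2_def)
  show ?thesis
  unfolding W D2F2_def D2F1_def D2F0_def D2A_def D2B_def a12_def b12_def mk2_simps Sp_def sigp_def
    kk1_def kk2_def kk3_def kk4_def gg_def
  apply (simp only: pcons_arith)
  apply (intro conjI)
  apply (use h1 h2 in algebra)+
  done
qed

lemma D2_e4:
  fixes \<alpha> \<beta> v :: real
  assumes K: "\<alpha> + v - \<beta> \<noteq> 0" "\<alpha> - v - \<beta> \<noteq> 0" "v \<noteq> 0"
  shows "smat Sp (D2B \<alpha> \<beta> v - mderiv (D2A \<alpha> \<beta> v)) + smat (sigp \<alpha> \<beta>) (D2A \<alpha> \<beta> v) = - (Wtp \<alpha> \<beta> v ** transpose (D2F1 \<alpha> \<beta> v))"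
proof -
  define c1 where "c1 = v * (\<alpha> + v + \<beta> + 2) / (\<alpha> + v - \<beta>)"
  define c2 where "c2 = - v * (\<alpha> - v + \<beta> + 2) / (\<alpha> - v - \<beta>)"
  have h1: "c1 * (\<alpha> + v - \<beta>) = v * (\<alpha> + v + \<beta> + 2)" using K unfolding c1_def by simp
  have h2: "c2 * (\<alpha> - v - \<beta>) = - v * (\<alpha> - v + \<beta> + 2)" using K unfolding c2_def by simp
  have W: "Wtp \<alpha> \<beta> v = mk2 [:\<alpha> + 1, - (\<alpha> + v + \<beta> + 2), c1:]
     [:- (\<alpha> + 1), \<alpha> + \<beta> + 2:] [:- (\<alpha> + 1), \<alpha> + \<beta> + 2:]
     [:\<alpha> + 1, - (\<alpha> - v + \<beta> + 2), c2:]"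
    by (simp add: Wtp_mk2 w11_def w12_def w22_def c1_def c2_def)
  show ?thesis
  unfolding W D2F2_def D2F1_def D2F0_def D2A_def D2B_def a12_def b12_def mk2_simps Sp_def sigp_def
    kk1_def kk2_def kk3_def kk4_def gg_def
  apply (simp only: pcons_arith)
  apply (intro conjI)
  apply (use h1 h2 in algebra)+
  done
qed

lemma D2_e5:
  fixes \<alpha> \<beta> v :: real
  assumes K: "\<alpha> + v - \<beta> \<noteq> 0" "\<alpha> - v - \<beta> \<noteq> 0" "v \<noteq> 0"
  shows "smat Sp (mderiv (D2B \<alpha> \<beta> v)) - smat (sigp \<alpha> \<beta>) (D2B \<alpha> \<beta> v) = D2F0 \<alpha> \<beta> v ** Wtp \<alpha> \<beta> v - Wtp \<alpha> \<beta> v ** transpose (D2F0 \<alpha> \<beta> v)"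
proof -
  define c1 where "c1 = v * (\<alpha> + v + \<beta> + 2) / (\<alpha> + v - \<beta>)"
  define c2 where "c2 = - v * (\<alpha> - v + \<beta> + 2) / (\<alpha> - v - \<beta>)"
  have h1: "c1 * (\<alpha> + v - \<beta>) = v * (\<alpha> + v + \<beta> + 2)" using K unfolding c1_def by simp
  have h2: "c2 * (\<alpha> - v - \<beta>) = - v * (\<alpha> - v + \<beta> + 2)" using K unfolding c2_def by simp
  have W: "Wtp \<alpha> \<beta> v = mk2 [:\<alpha> + 1, - (\<alpha> + v + \<beta> + 2), c1:]
     [:- (\<alpha> + 1), \<alpha> + \<beta> + 2:] [:- (\<alpha> + 1), \<alpha> + \<beta> + 2:]
     [:\<alpha> + 1, - (\<alpha> - v + \<beta> + 2), c2:]"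
    by (simp add: Wtp_mk2 w11_def w12_def w22_def c1_def c2_def)
  show ?thesis
  unfolding W D2F2_def D2F1_def D2F0_def D2A_def D2B_def a12_def b12_def mk2_simps Sp_def sigp_def
    kk1_def kk2_def kk3_def kk4_def gg_def
  apply (simp only: pcons_arith)
  apply (intro conjI)
  apply (use h1 h2 in algebra)+
  done
qed



lemma deg_helpers:
  "degree [:a:] \<le> 0" "degree [:a, b:] \<le> 1" "degree [:a, b, c:] \<le> 2"
  "degree [:a:] \<le> 1" "degree [:a:] \<le> 2" "degree [:a, b:] \<le> 2" "degree (0::real poly) \<le> n"
  for a b c :: real
  by (auto simp: degree_pCons_eq_if)

lemma mat1_mk2: "(mat 1 :: mpoly2) = mk2 1 0 0 1"
  by (subst mk2_eq) (simp add: mat_def)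

theorem corollary7p5:
  fixes \<alpha> \<beta> v :: real
  assumes "\<alpha> > -1" and "\<beta> > -1"
    and "\<bar>\<alpha> - \<beta>\<bar> < \<bar>v\<bar>" and "\<bar>v\<bar> < \<alpha> + \<beta> + 2"
  shows "\<exists>D1\<in>DW \<alpha> \<beta> v. \<exists>D2\<in>DW \<alpha> \<beta> v. \<exists>P.
           dact D2 (dact D1 P) \<noteq> dact D1 (dact D2 P)"
proof -
  note pf = param_facts[OF assms]
  have K: "\<alpha> + v - \<beta> \<noteq> 0" "\<alpha> - v - \<beta> \<noteq> 0" "v \<noteq> 0" using pf by auto
  have pd: "\<And>t x. 0 < t \<Longrightarrow> t < 1 \<Longrightarrow> x \<noteq> 0 \<Longrightarrow> x \<bullet> (Wtil \<alpha> \<beta> v t *v x) > 0"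
    by (rule Wtil_pd[OF assms])
  have m1: "[D1F0 v, D1F1 \<alpha> \<beta> v, D1F2] \<in> DW \<alpha> \<beta> v"
    by (rule DW_member[OF assms(1,2) pd D1_e1[OF K] D1_e2[OF K] D1_e3[OF K] D1_e4[OF K] D1_e5[OF K]])
       (simp_all add: mk2_mdeg D1F0_def D1F1_def D1F2_def deg_helpers)
  have m2: "[D2F0 \<alpha> \<beta> v, D2F1 \<alpha> \<beta> v, D2F2 \<alpha> \<beta> v] \<in> DW \<alpha> \<beta> v"
    by (rule DW_member[OF assms(1,2) pd D2_e1[OF K] D2_e2[OF K] D2_e3[OF K] D2_e4[OF K] D2_e5[OF K]])
       (simp_all add: mk2_mdeg D2F0_def D2F1_def D2F2_def deg_helpers)
  define x where "x = v * (kk2 \<alpha> \<beta> v * kk3 \<alpha> \<beta> v * kk4 \<alpha> \<beta> v * v * (\<alpha> + \<beta> - v + 4))"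
  define y where "y = v * (- kk1 \<alpha> \<beta> v * kk3 \<alpha> \<beta> v * kk4 \<alpha> \<beta> v * v * (\<alpha> + \<beta> + v + 4))"
  have x0: "x \<noteq> 0" using pf unfolding x_def kk2_def kk3_def kk4_def by auto
  have F0: "D2F0 \<alpha> \<beta> v = mk2 0 [:x:] [:y:] 0" by (simp add: D2F0_def x_def y_def)
  have a: "dact [D2F0 \<alpha> \<beta> v, D2F1 \<alpha> \<beta> v, D2F2 \<alpha> \<beta> v] (dact [D1F0 v, D1F1 \<alpha> \<beta> v, D1F2] (mat 1))
        = mk2 0 0 [:- v * y:] 0"
    unfolding dact_dop dop_def mat1_mk2 F0 D1F0_def D1F1_def D1F2_def D2F1_def D2F2_def mk2_simps
    by (simp add: pcons_arith)
  have b: "dact [D1F0 v, D1F1 \<alpha> \<beta> v, D1F2] (dact [D2F0 \<alpha> \<beta> v, D2F1 \<alpha> \<beta> v, D2F2 \<alpha> \<beta> v] (mat 1))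
        = mk2 0 [:- v * x:] 0 0"
    unfolding dact_dop dop_def mat1_mk2 F0 D1F0_def D1F1_def D1F2_def D2F1_def D2F2_def mk2_simps
    by (simp add: pcons_arith)
  have "mk2 0 0 [:- v * y:] 0 \<noteq> mk2 0 [:- v * x:] 0 0"
    using x0 K(3) by (simp add: mk2_eq_iff)
  then show ?thesis using m1 m2 a b by metis
qed


end
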